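(* Let $m\ge 3$ be an integer and let $n=2^m-1$. Let $\phi\in\mathbb{R}$ with binary expansion $\phi=2\pi\times 0.b_0b_1b_2\ldots$ (i.e. $\phi=\sum_{k\ge 0} b_k\,2\pi/2^{k+1}$, $b_k\in\{0,1\}$), and set $\phi_m=2^{m-1}\phi$ (so that, modulo $2\pi$, $\phi_m=2\pi\times 0.b_{m-1}b_mb_{m+1}\ldots$). Let $\alpha|0_L\rangle+\beta|1_L\rangle$ be any logical state of the code $\mathrm{QRM}(1,m)$. Apply $R_z(-\phi)$ transversally, i.e. apply $R_z(-\phi)^{\otimes n}$, and postselect on all stabilizer syndrome measurements ($X$-type and $Z$-type) giving the accepting outcome $+1$, i.e. apply the code-space projector $P_{+1}$. Then the resulting state is, up to normalization and a global phase, the logical state obtained by a logical rotation by the angle $$\phi'=\phi-2\arctan\left(\frac{\sin(\phi_m)}{(2^m-1)+\cos(\phi_m)}\right)$$ about the $Z$ axis, namely $\alpha|0_L\rangle+e^{i\phi'}\beta|1_L\rangle$.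
   Context: $Z=|0\rangle\langle0|-|1\rangle\langle1|$ and $R_z(\theta)=\exp(-i\theta Z/2)$. Classical first-order Reed–Muller code $\mathrm{RM}(1,m)$: binary code of length $2^m$ whose codewords are the truth tables (value lists over all $x\in\{0,1\}^m$) of affine Boolean functions $a_0+a_1x_1+\dots+a_mx_m$. The shortened code $\overline{\mathrm{RM}}(1,m)$ is obtained by keeping the codewords of $\mathrm{RM}(1,m)$ whose first coordinate (the value at $x=0$) is $0$ and deleting that coordinate; it has length $2^m-1$, one codeword of weight $0$ and $2^m-1$ codewords of weight $2^{m-1}$. The punctured code $\mathrm{RM}^*(1,m)$ is the code of length $2^m-1$ generated by $\overline{\mathrm{RM}}(1,m)$ together with the all-ones vector $\mathbf{1}$. The quantum Reed–Muller code $\mathrm{QRM}(1,m)$ is the CSS code on $n=2^m-1$ qubits with logical basis states $|x_L\rangle\propto\sum_{y\in\overline{\mathrm{RM}}(1,m)}|y+x\mathbf{1}\rangle$ for $x\in\{0,1\}$ (addition mod 2). Its $X$-type stabilizer generators $S^X_1,\dots,S^X_m$ are $X^{g_i}=\bigotimes_k X^{(g_i)_k}$ for a basis $g_1,\dots,g_m$ of $\overline{\mathrm{RM}}(1,m)$; its $Z$-type stabilizer generators $S^Z_1,\dots,S^Z_{2^m-m-2}$ are $Z^{h}$ for the rows $h$ of a parity-check matrix of $\mathrm{RM}^*(1,m)$. The code-space projector is $P_{+1}=\prod_{i}\frac{I+S^Z_i}{2}\prod_{i=1}^m\frac{I+S^X_i}{2}$. *)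

theory Defs
  imports Complex_Main
begin

text \<open>A binary vector of length L is represented by the set of
positions (in {0..<L}) where it has entry 1; addition mod 2 is symmetric
difference.  An n-qubit state is a function from computational basis labels
(subsets of {0..<n}, i.e. bit strings) to complex amplitudes.\<close>

definition qrm_n :: "nat \<Rightarrow> nat" where
  "qrm_n m = 2 ^ m - 1"

text \<open>Truth table of affine Boolean functions a0 + a_1 x_1 + ... + a_m x_m over
x in {0,1}^m; the point x is identified with the integer whose i-th binary
digit is x_(i+1); positions are listed in the natural order 0..2^m-1.\<close>
definition rm1 :: "nat \<Rightarrow> nat set set" where
  "rm1 m = {{x \<in> {0..<2 ^ m}. odd (of_bool a0 + (\<Sum>i<m. of_bool (a i) * (x div 2 ^ i mod 2)) :: nat)}
            | a0 a. True}"

definition rm1_short :: "nat \<Rightarrow> nat set set" where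
  "rm1_short m = {(\<lambda>x. x - 1) ` c | c. c \<in> rm1 m \<and> 0 \<notin> c}"

definition xsum :: "nat set set \<Rightarrow> nat set" where
  "xsum F = {k. odd (card {g \<in> F. k \<in> g})}"

definition gf2_span :: "nat set set \<Rightarrow> nat set set" where
  "gf2_span A = {xsum F | F. finite F \<and> F \<subseteq> A}"

definition rm1_punct :: "nat \<Rightarrow> nat set set" where
  "rm1_punct m = gf2_span (rm1_short m \<union> {{0..<qrm_n m}})"

definition ket0L :: "nat \<Rightarrow> nat set \<Rightarrow> complex" where
  "ket0L m S = (if S \<in> rm1_short m then 1 / sqrt (real (card (rm1_short m))) else 0)"

definition ket1L :: "nat \<Rightarrow> nat set \<Rightarrow> complex" where
  "ket1L m S = (if S \<in> {y \<union> {0..<qrm_n m} - (y \<inter> {0..<qrm_n m}) | y. y \<in> rm1_short m}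
                then 1 / sqrt (real (card (rm1_short m))) else 0)"

definition Xop :: "nat set \<Rightarrow> (nat set \<Rightarrow> complex) \<Rightarrow> (nat set \<Rightarrow> complex)" where
  "Xop g \<psi> = (\<lambda>S. \<psi> ((S - g) \<union> (g - S)))"

definition Zop :: "nat set \<Rightarrow> (nat set \<Rightarrow> complex) \<Rightarrow> (nat set \<Rightarrow> complex)" where
  "Zop h \<psi> = (\<lambda>S. (-1) ^ card (S \<inter> h) * \<psi> S)"

definition stab_proj :: "((nat set \<Rightarrow> complex) \<Rightarrow> (nat set \<Rightarrow> complex)) \<Rightarrow>
    (nat set \<Rightarrow> complex) \<Rightarrow> (nat set \<Rightarrow> complex)" where
  "stab_proj U \<psi> = (\<lambda>S. (\<psi> S + U \<psi> S) / 2)"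

definition code_proj :: "nat set list \<Rightarrow> nat set list \<Rightarrow>
    (nat set \<Rightarrow> complex) \<Rightarrow> (nat set \<Rightarrow> complex)" where
  "code_proj gs hs \<psi> =
     foldr (\<lambda>h. stab_proj (Zop h)) hs (foldr (\<lambda>g. stab_proj (Xop g)) gs \<psi>)"

definition is_X_generators :: "nat \<Rightarrow> nat set list \<Rightarrow> bool" where
  "is_X_generators m gs \<longleftrightarrow> length gs = m \<and> gf2_span (set gs) = rm1_short m"

text \<open>Z-type generators: the rows of a parity-check matrix of the punctured code
(2^m - m - 2 rows whose common kernel is exactly the code).\<close>
definition is_Z_generators :: "nat \<Rightarrow> nat set list \<Rightarrow> bool" where
  "is_Z_generators m hs \<longleftrightarrow> length hs = 2 ^ m - m - 2 \<and>
     (\<forall>h \<in> set hs. h \<subseteq> {0..<qrm_n m}) \<and>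
     (\<forall>y. y \<subseteq> {0..<qrm_n m} \<longrightarrow>
        (y \<in> rm1_punct m \<longleftrightarrow> (\<forall>h \<in> set hs. even (card (y \<inter> h)))))"

definition rz_transversal :: "nat \<Rightarrow> real \<Rightarrow> (nat set \<Rightarrow> complex) \<Rightarrow> (nat set \<Rightarrow> complex)" where
  "rz_transversal m \<theta> \<psi> = (\<lambda>S. (\<Prod>k<qrm_n m.
       if k \<in> S then exp (\<i> * of_real (\<theta> / 2)) else exp (- \<i> * of_real (\<theta> / 2))) * \<psi> S)"

end

theory Submission
  imports Defs
begin


definition pp :: "nat \<Rightarrow> (nat \<Rightarrow> bool) \<Rightarrow> nat \<Rightarrow> nat" where
  "pp m a x = (\<Sum>i<m. of_bool (a i) * (x div 2 ^ i mod 2))"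

definition W :: "nat \<Rightarrow> (nat \<Rightarrow> bool) \<Rightarrow> nat set" where
  "W m a = {k. k < 2 ^ m - 1 \<and> odd (pp m a (Suc k))}"

lemma divmod_bit: "(x::nat) div 2 ^ i mod 2 = of_bool (bit x i)"
  by (simp add: bit_iff_odd odd_iff_mod_2_eq_one)

lemma flip_flip: "flip_bit j (flip_bit j (x::nat)) = x"
  by (rule bit_eqI) (auto simp: bit_flip_bit_iff)

lemma flip_less: "(x::nat) < 2 ^ m \<Longrightarrow> j < m \<Longrightarrow> flip_bit j x < 2 ^ m"
  by (metis take_bit_flip_bit_eq take_bit_nat_eq_self_iff not_le)

lemma pp_flip:
  assumes "j < m" "a j"
  shows "odd (pp m a (flip_bit j x)) \<longleftrightarrow> even (pp m a x)"
proof -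
  have fin: "finite ({..<m} - {j})" by simp
  have split: "pp m a y = of_bool (a j) * (y div 2 ^ j mod 2) + (\<Sum>i\<in>{..<m} - {j}. of_bool (a i) * (y div 2 ^ i mod 2))" for y
    unfolding pp_def using assms(1) by (subst sum.remove[of _ j]) auto
  have rest: "(\<Sum>i\<in>{..<m} - {j}. of_bool (a i) * (flip_bit j x div 2 ^ i mod 2))
            = (\<Sum>i\<in>{..<m} - {j}. of_bool (a i) * (x div 2 ^ i mod 2))"
    by (rule sum.cong) (auto simp: divmod_bit bit_flip_bit_iff)
  have bj: "flip_bit j x div 2 ^ j mod 2 + x div 2 ^ j mod 2 = 1"
    by (auto simp: divmod_bit bit_flip_bit_iff)
  show ?thesis using bj unfolding split[of "flip_bit j x"] split[of x] rest using assms(2)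
    by (auto simp: divmod_bit bit_flip_bit_iff)
qed

lemma weight_full:
  assumes "j < m" "a j"
  shows "card {x\<in>{..<(2::nat) ^ m}. odd (pp m a x)} = 2 ^ (m - 1)"
proof -
  let ?O = "{x\<in>{..<(2::nat) ^ m}. odd (pp m a x)}"
  let ?E = "{x\<in>{..<(2::nat) ^ m}. even (pp m a x)}"
  have pf: "even (pp m a (flip_bit j x)) \<longleftrightarrow> odd (pp m a x)" for x
    using pp_flip[of j m a x] assms by blast
  have "bij_betw (flip_bit j) ?O ?E"
  proof (rule bij_betw_byWitness[where f'="flip_bit j"])
    show "\<forall>x\<in>?O. flip_bit j (flip_bit j x) = x" by (simp add: flip_flip)
    show "\<forall>x\<in>?E. flip_bit j (flip_bit j x) = x" by (simp add: flip_flip)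
    show "flip_bit j ` ?O \<subseteq> ?E"
    proof
      fix y assume "y \<in> flip_bit j ` ?O"
      then obtain x where "x \<in> ?O" "y = flip_bit j x" by blast
      then show "y \<in> ?E" using pf[of x] flip_less[of x m j] assms by auto
    qed
    show "flip_bit j ` ?E \<subseteq> ?O"
    proof
      fix y assume "y \<in> flip_bit j ` ?E"
      then obtain x where "x \<in> ?E" "y = flip_bit j x" by blast
      then show "y \<in> ?O" using pp_flip[of j m a x] flip_less[of x m j] assms by auto
    qed
  qed
  then have "card ?O = card ?E" by (rule bij_betw_same_card)
  moreover have "card ?O + card ?E = 2 ^ m"
  proof -
    have "?O \<union> ?E = {..<2^m}" by auto
    then show ?thesis by (subst card_Un_disjoint[symmetric]) auto
  qed
  moreover have "(2::nat) ^ m = 2 * 2 ^ (m - 1)" using assms(1)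
    by (cases m) auto
  ultimately show ?thesis by linarith
qed

definition sd :: "nat set \<Rightarrow> nat set \<Rightarrow> nat set" where
  "sd A B = (A - B) \<union> (B - A)"

lemma pp_zero[simp]: "pp m a 0 = 0" by (simp add: pp_def)

lemma img_W: "(\<lambda>x. x - 1) ` {x \<in> {0..<2 ^ m}. odd (pp m a x)} = W m a"
proof (rule equalityI)
  show "(\<lambda>x. x - 1) ` {x \<in> {0..<2 ^ m}. odd (pp m a x)} \<subseteq> W m a"
  proof
    fix k assume "k \<in> (\<lambda>x. x - 1) ` {x \<in> {0..<2 ^ m}. odd (pp m a x)}"
    then obtain x where x: "x < 2 ^ m" "odd (pp m a x)" "k = x - 1" by auto
    have "x \<noteq> 0"
    proof
      assume "x = 0" then show False using x(2) by simp
    qed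
    then have "x = Suc k" using x by simp
    then show "k \<in> W m a" unfolding W_def using x by simp
  qed
  show "W m a \<subseteq> (\<lambda>x. x - 1) ` {x \<in> {0..<2 ^ m}. odd (pp m a x)}"
  proof
    fix k assume "k \<in> W m a"
    then have "Suc k \<in> {x \<in> {0..<2 ^ m}. odd (pp m a x)}" unfolding W_def by auto
    then show "k \<in> (\<lambda>x. x - 1) ` {x \<in> {0..<2 ^ m}. odd (pp m a x)}"
      by (rule rev_image_eqI) simp
  qed
qed

lemma rm1_short_eq: "rm1_short m = range (W m)"
proof (rule equalityI)
  show "rm1_short m \<subseteq> range (W m)"
  proof
    fix s assume "s \<in> rm1_short m"
    then obtain a0 a where c0: "0 \<notin> {x \<in> {0..<2 ^ m}. odd (of_bool a0 + pp m a x)}"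
      and s: "s = (\<lambda>x. x - 1) ` {x \<in> {0..<2 ^ m}. odd (of_bool a0 + pp m a x)}"
      unfolding rm1_short_def rm1_def pp_def by blast
    have "\<not> a0" using c0 by auto
    then have "s = W m a" unfolding s img_W[symmetric] by simp
    then show "s \<in> range (W m)" by blast
  qed
next
  show "range (W m) \<subseteq> rm1_short m"
  proof
    fix s assume "s \<in> range (W m)"
    then obtain a where s: "s = W m a" by blast
    let ?c = "{x \<in> {0..<2 ^ m}. odd (of_bool False + (\<Sum>i<m. of_bool (a i) * (x div 2 ^ i mod 2)) :: nat)}"
    have "?c \<in> rm1 m" unfolding rm1_def by blast
    moreover have "0 \<notin> ?c" by simp
    moreover have "s = (\<lambda>x. x - 1) ` ?c" unfolding s img_W[symmetric] pp_def by simp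
    ultimately show "s \<in> rm1_short m" unfolding rm1_short_def by blast
  qed
qed

lemma W_cong: assumes "\<And>i. i < m \<Longrightarrow> a i = b i" shows "W m a = W m b"
proof -
  have "pp m a x = pp m b x" for x unfolding pp_def by (rule sum.cong) (use assms in auto)
  then show ?thesis unfolding W_def by simp
qed

lemma pp_xor: "pp m a x + pp m b x = pp m (\<lambda>i. a i \<noteq> b i) x + 2 * pp m (\<lambda>i. a i \<and> b i) x"
  unfolding pp_def sum.distrib[symmetric] sum_distrib_left
  by (rule sum.cong) auto

lemma W_xor: "sd (W m a) (W m b) = W m (\<lambda>i. a i \<noteq> b i)"
proof -
  have "odd (pp m (\<lambda>i. a i \<noteq> b i) y) \<longleftrightarrow> odd (pp m a y) \<noteq> odd (pp m b y)" for y
  proof -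
    have e: "pp m a y + pp m b y = pp m (\<lambda>i. a i \<noteq> b i) y + 2 * pp m (\<lambda>i. a i \<and> b i) y"
      by (rule pp_xor)
    have "even (pp m a y + pp m b y) \<longleftrightarrow> even (pp m (\<lambda>i. a i \<noteq> b i) y)" unfolding e by simp
    then show ?thesis by auto
  qed
  then show ?thesis unfolding sd_def W_def by auto
qed

lemma W_sub: "W m a \<subseteq> {0..<2 ^ m - 1}" unfolding W_def by auto

lemma W_card:
  assumes "j < m" "a j"
  shows "card (W m a) = 2 ^ (m - 1)"
proof -
  have "Suc ` W m a = {x\<in>{..<(2::nat) ^ m}. odd (pp m a x)}"
  proof (auto simp: W_def image_iff)
    fix x :: nat assume "x < 2 ^ m" "odd (pp m a x)"
    then show "\<exists>k. k < 2 ^ m - Suc 0 \<and> odd (pp m a (Suc k)) \<and> x = Suc k"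
      by (cases x) auto
  qed
  then have "card (Suc ` W m a) = 2 ^ (m - 1)" using weight_full[of j m a, OF assms] by simp
  then show ?thesis by (simp add: card_image)
qed

lemma W_empty_iff: "W m a = {} \<longleftrightarrow> (\<forall>i<m. \<not> a i)"
proof
  assume "W m a = {}"
  show "\<forall>i<m. \<not> a i"
  proof (intro allI impI notI)
    fix i assume "i < m" "a i"
    then have "card (W m a) = 2 ^ (m - 1)" by (rule W_card)
    with \<open>W m a = {}\<close> show False by simp
  qed
next
  assume "\<forall>i<m. \<not> a i"
  then have "W m a = W m (\<lambda>_. False)" by (intro W_cong) auto
  then show "W m a = {}" by (simp add: W_def pp_def)
qed

lemma card_R: "card (range (W m)) = 2 ^ m"
proof -
  have eq: "range (W m) = (\<lambda>A. W m (\<lambda>i. i \<in> A)) ` Pow {..<m}"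
  proof (rule equalityI)
    show "(\<lambda>A. W m (\<lambda>i. i \<in> A)) ` Pow {..<m} \<subseteq> range (W m)" by blast
    show "range (W m) \<subseteq> (\<lambda>A. W m (\<lambda>i. i \<in> A)) ` Pow {..<m}"
    proof
    fix s assume "s \<in> range (W m)"
    then obtain a where s: "s = W m a" by blast
    have "W m a = W m (\<lambda>i. i \<in> {i. i < m \<and> a i})" by (rule W_cong) simp
    moreover have "{i. i < m \<and> a i} \<subseteq> {..<m}" by auto
    ultimately show "s \<in> (\<lambda>A. W m (\<lambda>i. i \<in> A)) ` Pow {..<m}" unfolding s by blast
  qed
  qed
  have "inj_on (\<lambda>A. W m (\<lambda>i. i \<in> A)) (Pow {..<m})"
  proof (rule inj_onI)
    fix A B assume A: "A \<in> Pow {..<m}" and B: "B \<in> Pow {..<m}"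
      and e: "W m (\<lambda>i. i \<in> A) = W m (\<lambda>i. i \<in> B)"
    have "sd (W m (\<lambda>i. i \<in> A)) (W m (\<lambda>i. i \<in> B)) = {}" using e by (simp add: sd_def)
    then have "\<forall>i<m. (i \<in> A) = (i \<in> B)" unfolding W_xor W_empty_iff by blast
    then show "A = B" using A B by auto
  qed
  then show ?thesis unfolding eq by (simp add: card_image card_Pow)
qed


lemma xsum_empty[simp]: "xsum {} = {}" by (simp add: xsum_def)

lemma xsum_insert:
  assumes "finite F" "g \<notin> F"
  shows "xsum (insert g F) = sd (xsum F) g"
proof -
  have "odd (card {h \<in> insert g F. k \<in> h}) \<longleftrightarrow> (odd (card {h \<in> F. k \<in> h}) \<noteq> (k \<in> g))" for k
  proof (cases "k \<in> g")
    case True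
    then have "{h \<in> insert g F. k \<in> h} = insert g {h \<in> F. k \<in> h}" by auto
    moreover have "card (insert g {h \<in> F. k \<in> h}) = Suc (card {h \<in> F. k \<in> h})"
      using assms by simp
    ultimately show ?thesis using True by simp
  next
    case False
    then have "{h \<in> insert g F. k \<in> h} = {h \<in> F. k \<in> h}" by auto
    then show ?thesis using False by simp
  qed
  then show ?thesis unfolding xsum_def sd_def by auto
qed

lemma sd_assoc: "sd (sd S g) X = sd S (sd X g)" unfolding sd_def by auto

lemma Xop_sd: "Xop g \<psi> S = \<psi> (sd S g)" unfolding Xop_def sd_def by simp

lemma Xfold:
  assumes "distinct gs"
  shows "foldr (\<lambda>g. stab_proj (Xop g)) gs \<psi> =
         (\<lambda>S. (\<Sum>F\<in>Pow (set gs). \<psi> (sd S (xsum F))) / 2 ^ length gs)"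
  using assms
proof (induction gs)
  case Nil
  show ?case by (simp add: sd_def)
next
  case (Cons g gs)
  let ?G = "set gs"
  have g: "g \<notin> ?G" and d: "distinct gs" using Cons.prems by auto
  have IH: "foldr (\<lambda>g. stab_proj (Xop g)) gs \<psi> =
         (\<lambda>S. (\<Sum>F\<in>Pow ?G. \<psi> (sd S (xsum F))) / 2 ^ length gs)" using Cons.IH d .
  show ?case
  proof
    fix S
    have fin: "finite (Pow ?G)" by simp
    have disj: "Pow ?G \<inter> insert g ` Pow ?G = {}" using g by auto
    have inj: "inj_on (insert g) (Pow ?G)" using g by (auto simp: inj_on_def)
    have "(\<Sum>F\<in>Pow (set (g # gs)). \<psi> (sd S (xsum F)))
        = (\<Sum>F\<in>Pow ?G. \<psi> (sd S (xsum F))) + (\<Sum>F\<in>insert g ` Pow ?G. \<psi> (sd S (xsum F)))"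
      by (simp add: Pow_insert sum.union_disjoint disj)
    also have "(\<Sum>F\<in>insert g ` Pow ?G. \<psi> (sd S (xsum F))) = (\<Sum>F\<in>Pow ?G. \<psi> (sd (sd S g) (xsum F)))"
    proof (subst sum.reindex[OF inj], rule sum.cong)
      fix F assume "F \<in> Pow ?G"
      then have "finite F" "g \<notin> F" using g finite_subset by auto
      then show "((\<lambda>F. \<psi> (sd S (xsum F))) \<circ> insert g) F = \<psi> (sd (sd S g) (xsum F))"
        by (simp add: xsum_insert sd_assoc)
    qed simp
    finally have e: "(\<Sum>F\<in>Pow (set (g # gs)). \<psi> (sd S (xsum F)))
        = (\<Sum>F\<in>Pow ?G. \<psi> (sd S (xsum F))) + (\<Sum>F\<in>Pow ?G. \<psi> (sd (sd S g) (xsum F)))" .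
    show "foldr (\<lambda>g. stab_proj (Xop g)) (g # gs) \<psi> S =
         (\<Sum>F\<in>Pow (set (g # gs)). \<psi> (sd S (xsum F))) / 2 ^ length (g # gs)"
      unfolding e by (simp add: IH stab_proj_def Xop_sd add_divide_distrib mult.commute)
  qed
qed

lemma Zstep: "stab_proj (Zop h) \<Phi> S = (if even (card (S \<inter> h)) then \<Phi> S else 0)"
  by (auto simp: stab_proj_def Zop_def)

lemma Zfold:
  "foldr (\<lambda>h. stab_proj (Zop h)) hs \<phi> S =
     (if \<forall>h\<in>set hs. even (card (S \<inter> h)) then \<phi> S else 0)"
proof (induction hs)
  case Nil
  show ?case by simp
next
  case (Cons h hs)
  have "foldr (\<lambda>h. stab_proj (Zop h)) (h # hs) \<phi> S =
     stab_proj (Zop h) (foldr (\<lambda>h. stab_proj (Zop h)) hs \<phi>) S" by simp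
  also have "\<dots> = (if even (card (S \<inter> h)) then foldr (\<lambda>h. stab_proj (Zop h)) hs \<phi> S else 0)"
    by (rule Zstep)
  finally show ?case unfolding Cons.IH by simp
qed

lemma trig:
  fixes \<phi> :: real and h n :: nat
  assumes h2: "h \<ge> 2" and nh: "n = 2 * h - 1"
  shows "cis (-\<phi>/2) ^ n + of_nat n * (cis (-\<phi>/2) ^ (n - h) * cis (\<phi>/2) ^ h)
          = cis (\<phi> - 2 * arctan (sin (h * \<phi>) / (n + cos (h * \<phi>))))
            * (cis (\<phi>/2) ^ n + of_nat n * (cis (-\<phi>/2) ^ h * cis (\<phi>/2) ^ (n - h)))"
    and "cis (\<phi>/2) ^ n + of_nat n * (cis (-\<phi>/2) ^ h * cis (\<phi>/2) ^ (n - h)) \<noteq> 0"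
proof -
  have rn: "real n = 2 * real h - 1" using nh h2 by simp
  have rnh: "real (n - h) = real h - 1" using nh h2 by simp
  define c where "c = cos (h * \<phi>)"
  define s where "s = sin (h * \<phi>)"
  define t where "t = arctan (s / (n + c))"
  define \<rho> where "\<rho> = (n + c) / cos t"
  have pos: "n + c > 0"
  proof -
    have "c \<ge> -1" unfolding c_def by simp
    moreover have "real h \<ge> 2" using h2 by simp
    ultimately show ?thesis using rn by linarith
  qed
  have ct: "cos t \<noteq> 0" unfolding t_def by simp
  have tt: "sin t / cos t = s / (n + c)" unfolding t_def by (metis tan_arctan tan_def)
  have rho0: "\<rho> \<noteq> 0" using pos ct unfolding \<rho>_def by simp
  have k1: "of_nat n + cis (-(h * \<phi>)) = complex_of_real \<rho> * cis (- t)"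
  proof (rule complex_eqI)
    show "Re (of_nat n + cis (-(h * \<phi>))) = Re (complex_of_real \<rho> * cis (- t))"
      using ct by (simp add: \<rho>_def c_def)
    have "\<rho> * sin t = s" using tt ct pos unfolding \<rho>_def by (simp add: field_simps)
    then show "Im (of_nat n + cis (-(h * \<phi>))) = Im (complex_of_real \<rho> * cis (- t))"
      by (simp add: s_def)
  qed
  have k2: "of_nat n + cis (h * \<phi>) = complex_of_real \<rho> * cis t"
  proof (rule complex_eqI)
    show "Re (of_nat n + cis (h * \<phi>)) = Re (complex_of_real \<rho> * cis t)"
      using ct by (simp add: \<rho>_def c_def)
    have "\<rho> * sin t = s" using tt ct pos unfolding \<rho>_def by (simp add: field_simps)
    then show "Im (of_nat n + cis (h * \<phi>)) = Im (complex_of_real \<rho> * cis t)"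
      by (simp add: s_def)
  qed
  have e1: "cis (-\<phi>/2) ^ n = cis (\<phi>/2) * cis (-(h * \<phi>))"
    unfolding DeMoivre cis_mult by (rule arg_cong[where f=cis]) (simp add: rn algebra_simps)
  have e2: "cis (-\<phi>/2) ^ (n - h) * cis (\<phi>/2) ^ h = cis (\<phi>/2)"
    unfolding DeMoivre cis_mult by (rule arg_cong[where f=cis]) (simp add: rnh field_simps)
  have e3: "cis (\<phi>/2) ^ n = cis (-\<phi>/2) * cis (h * \<phi>)"
    unfolding DeMoivre cis_mult by (rule arg_cong[where f=cis]) (simp add: rn field_simps)
  have e4: "cis (-\<phi>/2) ^ h * cis (\<phi>/2) ^ (n - h) = cis (-\<phi>/2)"
    unfolding DeMoivre cis_mult by (rule arg_cong[where f=cis]) (simp add: rnh field_simps)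
  have L: "cis (-\<phi>/2) ^ n + of_nat n * (cis (-\<phi>/2) ^ (n - h) * cis (\<phi>/2) ^ h)
       = cis (\<phi>/2) * (of_nat n + cis (-(h * \<phi>)))"
    unfolding e1 e2 by (simp add: algebra_simps)
  have R: "cis (\<phi>/2) ^ n + of_nat n * (cis (-\<phi>/2) ^ h * cis (\<phi>/2) ^ (n - h))
       = cis (-\<phi>/2) * (of_nat n + cis (h * \<phi>))"
    unfolding e3 e4 by (simp add: algebra_simps)
  have tdef: "arctan (sin (h * \<phi>) / (n + cos (h * \<phi>))) = t" unfolding t_def s_def c_def by simp
  show "cis (-\<phi>/2) ^ n + of_nat n * (cis (-\<phi>/2) ^ (n - h) * cis (\<phi>/2) ^ h)
          = cis (\<phi> - 2 * arctan (sin (h * \<phi>) / (n + cos (h * \<phi>))))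
            * (cis (\<phi>/2) ^ n + of_nat n * (cis (-\<phi>/2) ^ h * cis (\<phi>/2) ^ (n - h)))"
  proof -
    have E: "cis (\<phi> - 2 * t) * cis (-\<phi>/2) * cis t = cis (\<phi>/2) * cis (-t)"
      unfolding cis_mult by (rule arg_cong[where f=cis]) (simp add: field_simps)
    have "cis (\<phi> - 2 * t) * (cis (-\<phi>/2) * (complex_of_real \<rho> * cis t))
        = complex_of_real \<rho> * (cis (\<phi> - 2 * t) * cis (-\<phi>/2) * cis t)"
      by (simp only: ac_simps)
    also have "\<dots> = cis (\<phi>/2) * (complex_of_real \<rho> * cis (- t))"
      unfolding E by (simp only: ac_simps)
    finally show ?thesis unfolding L R tdef k1 k2 by (rule sym)
  qed
  show "cis (\<phi>/2) ^ n + of_nat n * (cis (-\<phi>/2) ^ h * cis (\<phi>/2) ^ (n - h)) \<noteq> 0"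
    unfolding R k2 using rho0 by simp
qed

lemma R_sub: "y \<in> rm1_short m \<Longrightarrow> y \<subseteq> {0..<qrm_n m}"
  unfolding rm1_short_eq qrm_n_def using W_sub by blast

lemma R_empty: "{} \<in> rm1_short m"
proof -
  have "W m (\<lambda>_. False) = {}" by (simp add: W_empty_iff)
  then show ?thesis unfolding rm1_short_eq by (metis rangeI)
qed

lemma R_card_el: "y \<in> rm1_short m \<Longrightarrow> y \<noteq> {} \<Longrightarrow> card y = 2 ^ (m - 1)"
  unfolding rm1_short_eq using W_empty_iff W_card by blast

lemma R_sd: "y \<in> rm1_short m \<Longrightarrow> z \<in> rm1_short m \<Longrightarrow> sd y z \<in> rm1_short m"
proof -
  assume "y \<in> rm1_short m" "z \<in> rm1_short m"
  then obtain a b where "y = W m a" "z = W m b" unfolding rm1_short_eq by blast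
  then have "sd y z = W m (\<lambda>i. a i \<noteq> b i)" by (simp add: W_xor)
  then show ?thesis unfolding rm1_short_eq by simp
qed

lemma R_card: "card (rm1_short m) = 2 ^ m"
  unfolding rm1_short_eq by (rule card_R)

lemma R_fin: "finite (rm1_short m)"
  using R_card by (metis card_ge_0_finite zero_less_power zero_less_numeral)

lemma gens:
  assumes "is_X_generators m gs"
  shows "distinct gs" "inj_on xsum (Pow (set gs))" "xsum ` Pow (set gs) = rm1_short m"
proof -
  let ?G = "set gs"
  have len: "length gs = m" and sp: "gf2_span ?G = rm1_short m"
    using assms unfolding is_X_generators_def by auto
  have img: "gf2_span ?G = xsum ` Pow ?G"
    unfolding gf2_span_def using finite_subset by fastforce
  show im: "xsum ` Pow (set gs) = rm1_short m" using img sp by simp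
  have "2 ^ m = card (xsum ` Pow ?G)" using im R_card by simp
  also have "\<dots> \<le> card (Pow ?G)" by (rule card_image_le) simp
  also have "\<dots> = 2 ^ card ?G" by (simp add: card_Pow)
  finally have le: "(2::nat) ^ m \<le> 2 ^ card ?G" .
  then have "m \<le> card ?G" by simp
  moreover have "card ?G \<le> m" using card_length[of gs] len by simp
  ultimately have cG: "card ?G = m" by simp
  then show "distinct gs" using len by (simp add: card_distinct)
  have "card (xsum ` Pow ?G) = card (Pow ?G)" using im R_card cG by (simp add: card_Pow)
  then show "inj_on xsum (Pow (set gs))" by (simp add: inj_on_iff_eq_card)
qed

lemma sum_R_card:
  "(\<Sum>y\<in>rm1_short m. f (card y)) = f 0 + of_nat (2 ^ m - 1) * f (2 ^ (m - 1))"
proof -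
  have "(\<Sum>y\<in>rm1_short m. f (card y)) = f (card {}) + (\<Sum>y\<in>rm1_short m - {{}}. f (card y))"
    using sum.remove[OF R_fin[of m] R_empty[of m], of "\<lambda>y. f (card y)"] by simp
  also have "(\<Sum>y\<in>rm1_short m - {{}}. f (card y)) = (\<Sum>y\<in>rm1_short m - {{}}. f (2 ^ (m - 1)))"
  proof (rule sum.cong)
    fix y assume "y \<in> rm1_short m - {{}}"
    then show "f (card y) = f (2 ^ (m - 1))" using R_card_el[of y m] by simp
  qed simp
  also have "\<dots> = of_nat (2 ^ m - 1) * f (2 ^ (m - 1))"
    using R_fin R_empty R_card by simp
  finally show ?thesis by simp
qed

lemma prodD:
  assumes "S \<subseteq> {..<n}"
  shows "(\<Prod>k<n. if k \<in> S then a else b) = a ^ card S * b ^ (n - card S)"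
proof -
  have "(\<Prod>k<n. if k \<in> S then a else b) = prod (\<lambda>_. a) ({..<n} \<inter> {k. k \<in> S}) * prod (\<lambda>_. b) ({..<n} \<inter> - {k. k \<in> S})"
    by (rule prod.If_cases) simp
  moreover have "{..<n} \<inter> {k. k \<in> S} = S" using assms by auto
  moreover have "{..<n} \<inter> - {k. k \<in> S} = {..<n} - S" by auto
  moreover have "card ({..<n} - S) = n - card S"
    using assms by (simp add: card_Diff_subset finite_subset)
  ultimately show ?thesis by simp
qed

lemma sdU: "y \<union> U - (y \<inter> U) = sd y U" unfolding sd_def by auto

lemma sd_comm: "sd a b = sd b a" unfolding sd_def by auto

lemma sd_self_inv: "sd S (sd S y) = y" unfolding sd_def by auto

lemma card_sdU: "y \<subseteq> U \<Longrightarrow> finite U \<Longrightarrow> card (sd y U) = card U - card y"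
proof -
  assume "y \<subseteq> U" "finite U"
  then have "sd y U = U - y" unfolding sd_def by auto
  then show ?thesis using \<open>y \<subseteq> U\<close> \<open>finite U\<close> by (simp add: card_Diff_subset finite_subset)
qed

lemma U_notin_R:
  assumes "m \<ge> 3"
  shows "{0..<qrm_n m} \<notin> rm1_short m"
proof
  assume U: "{0..<qrm_n m} \<in> rm1_short m"
  have h: "(2::nat) ^ m = 2 * 2 ^ (m - 1)" using assms by (cases m) auto
  have h4: "(2::nat) ^ (m - 1) \<ge> 2 ^ 2" using assms by (intro power_increasing) auto
  have "{0..<qrm_n m} \<noteq> {}" using h h4 unfolding qrm_n_def by auto
  then have "card {0..<qrm_n m} = 2 ^ (m - 1)" using R_card_el[OF U] by simp
  then show False using h h4 unfolding qrm_n_def by simp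
qed

lemma in_punct:
  assumes "m \<ge> 3" "S \<in> rm1_short m \<or> (\<exists>y \<in> rm1_short m. S = sd y {0..<qrm_n m})"
  shows "S \<in> rm1_punct m"
  using assms(2)
proof
  assume "S \<in> rm1_short m"
  then have "S = xsum {S} \<and> finite {S} \<and> {S} \<subseteq> rm1_short m \<union> {{0..<qrm_n m}}"
    using xsum_insert[of "{}" S] by (simp add: sd_def)
  then show ?thesis unfolding rm1_punct_def gf2_span_def by blast
next
  assume "\<exists>y \<in> rm1_short m. S = sd y {0..<qrm_n m}"
  then obtain y where y: "y \<in> rm1_short m" "S = sd y {0..<qrm_n m}" by blast
  have ne: "y \<noteq> {0..<qrm_n m}" using U_notin_R[OF assms(1)] y by auto
  have "xsum {y, {0..<qrm_n m}} = S"
    using xsum_insert[of "{{0..<qrm_n m}}" y] xsum_insert[of "{}" "{0..<qrm_n m}"] ne y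
    by (auto simp: sd_def)
  then show ?thesis using y unfolding rm1_punct_def gf2_span_def by blast
qed

lemma sum_shift:
  assumes "z \<in> rm1_short m"
  shows "(\<Sum>y\<in>rm1_short m. g (sd z y)) = (\<Sum>y\<in>rm1_short m. g y)"
proof (rule sum.reindex_bij_betw)
  show "bij_betw (sd z) (rm1_short m) (rm1_short m)"
    by (rule bij_betw_byWitness[where f'="sd z"]) (auto simp: sd_self_inv R_sd assms)
qed

lemma main:
  fixes m :: nat and \<phi> :: real and \<alpha> \<beta> :: complex and gs hs :: "nat set list"
  assumes m3: "m \<ge> 3" and gx: "is_X_generators m gs" and gz: "is_Z_generators m hs"
  shows "\<exists>c::complex. c \<noteq> 0 \<and>
    code_proj gs hs (rz_transversal m (- \<phi>) (\<lambda>S. \<alpha> * ket0L m S + \<beta> * ket1L m S))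
    = (\<lambda>S. c * (\<alpha> * ket0L m S + exp (\<i> * of_real (\<phi> - 2 * arctan (sin (2 ^ (m - 1) * \<phi>) / (real (qrm_n m) + cos (2 ^ (m - 1) * \<phi>))))) * \<beta> * ket1L m S))"
proof -
  define R where "R = rm1_short m"
  define n where "n = qrm_n m"
  define U where "U = {0..<n}"
  define h where "h = (2::nat) ^ (m - 1)"
  define e where "e = exp (\<i> * of_real (\<phi> - 2 * arctan (sin (2 ^ (m - 1) * \<phi>) / (real (qrm_n m) + cos (2 ^ (m - 1) * \<phi>)))))"
  define K where "K = ket0L m {}"
  define Rc where "Rc = {sd y U | y. y \<in> R}"
  define A where "A = exp (\<i> * complex_of_real (- \<phi> / 2))"
  define B where "B = exp (- \<i> * complex_of_real (- \<phi> / 2))"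
  define D where "D S = (\<Prod>k<n. if k \<in> S then A else B)" for S
  define \<psi>0 where "\<psi>0 S = \<alpha> * ket0L m S + \<beta> * ket1L m S" for S
  have h2m: "(2::nat) ^ m = 2 * h" unfolding h_def using m3 by (cases m) auto
  have h4: "h \<ge> 4" unfolding h_def using m3 power_increasing[of 2 "m - 1" "2::nat"] by simp
  have nh: "n = 2 * h - 1" unfolding n_def qrm_n_def h2m ..
  have finU: "finite U" unfolding U_def by simp
  have cardU: "card U = n" unfolding U_def by simp
  have UnR: "U \<notin> R" unfolding U_def R_def n_def using U_notin_R[OF m3] .
  have Rsub: "y \<in> R \<Longrightarrow> y \<subseteq> U" for y unfolding R_def U_def n_def by (rule R_sub)
  have k0: "ket0L m S = (if S \<in> R then K else 0)" for S
    unfolding K_def ket0L_def R_def using R_empty by simp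
  have k1: "ket1L m S = (if S \<in> Rc then K else 0)" for S
    unfolding K_def ket0L_def ket1L_def R_def Rc_def U_def n_def sdU using R_empty by auto
  have disj: "S \<in> R \<Longrightarrow> S \<notin> Rc" for S
  proof
    assume "S \<in> R" "S \<in> Rc"
    then obtain y where y: "y \<in> R" "S = sd y U" unfolding Rc_def by blast
    have "sd y S = U" using y sd_self_inv by simp
    then have "U \<in> R" using R_sd[of y m S] y \<open>S \<in> R\<close> unfolding R_def by simp
    then show False using UnR by simp
  qed
  have rz: "rz_transversal m (- \<phi>) (\<lambda>S. \<alpha> * ket0L m S + \<beta> * ket1L m S) = (\<lambda>S. D S * \<psi>0 S)"
    unfolding rz_transversal_def D_def A_def B_def n_def \<psi>0_def by simp
  have Xf: "foldr (\<lambda>g. stab_proj (Xop g)) gs \<Psi> = (\<lambda>S. (\<Sum>y\<in>R. \<Psi> (sd S y)) / 2 ^ m)" for \<Psi>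
  proof -
    have len: "length gs = m" using gx unfolding is_X_generators_def by simp
    have "(\<Sum>F\<in>Pow (set gs). \<Psi> (sd S (xsum F))) = (\<Sum>y\<in>R. \<Psi> (sd S y))" for S
      unfolding R_def gens(3)[OF gx, symmetric]
      by (simp add: sum.reindex[OF gens(2)[OF gx]])
    then show ?thesis unfolding Xfold[OF gens(1)[OF gx]] len by simp
  qed
  have CP: "code_proj gs hs \<Psi> S = (if \<forall>h\<in>set hs. even (card (S \<inter> h)) then (\<Sum>y\<in>R. \<Psi> (sd S y)) / 2 ^ m else 0)" for \<Psi> S
    unfolding code_proj_def Zfold Xf by simp
  have Zind: "\<forall>h\<in>set hs. even (card (S \<inter> h))" if "S \<in> R \<or> S \<in> Rc" for S
  proof -
    have sub: "S \<subseteq> {0..<qrm_n m}"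
      using that Rsub unfolding Rc_def U_def n_def sd_def by auto
    have "S \<in> rm1_punct m"
      by (rule in_punct[OF m3]) (use that in \<open>auto simp: R_def Rc_def U_def n_def\<close>)
    then show ?thesis using gz sub unfolding is_Z_generators_def by blast
  qed
  have DR: "D y = A ^ card y * B ^ (n - card y)" if "y \<subseteq> U" for y
    unfolding D_def by (rule prodD) (use that in \<open>auto simp: U_def\<close>)
  have gen: "(\<Sum>y\<in>R. f (card y)) = f 0 + of_nat n * f h" for f :: "nat \<Rightarrow> complex"
    unfolding R_def n_def qrm_n_def h_def by (rule sum_R_card)
  define S0 where "S0 = (\<Sum>y\<in>R. D y)"
  define S1 where "S1 = (\<Sum>y\<in>R. D (sd y U))"
  have S0v: "S0 = B ^ n + of_nat n * (A ^ h * B ^ (n - h))"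
  proof -
    have "S0 = (\<Sum>y\<in>R. A ^ card y * B ^ (n - card y))"
      unfolding S0_def by (rule sum.cong) (auto simp: DR Rsub)
    also have "\<dots> = B ^ n + of_nat n * (A ^ h * B ^ (n - h))"
      unfolding gen[of "\<lambda>k. A ^ k * B ^ (n - k)"] by simp
    finally show ?thesis .
  qed
  have S1v: "S1 = A ^ n + of_nat n * (A ^ (n - h) * B ^ h)"
  proof -
    have "S1 = (\<Sum>y\<in>R. A ^ (n - card y) * B ^ card y)"
      unfolding S1_def
    proof (rule sum.cong)
      fix y assume "y \<in> R"
      then have yU: "y \<subseteq> U" by (rule Rsub)
      then have "sd y U \<subseteq> U" unfolding sd_def by auto
      moreover have "card y \<le> n" using yU finU cardU card_mono by fastforce
      ultimately show "D (sd y U) = A ^ (n - card y) * B ^ card y"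
        using DR card_sdU[OF yU finU] cardU by simp
    qed simp
    also have "\<dots> = A ^ n + of_nat n * (A ^ (n - h) * B ^ h)"
      unfolding gen[of "\<lambda>k. A ^ (n - k) * B ^ k"] by simp
    finally show ?thesis .
  qed
  have Ac: "A = cis (- \<phi> / 2)" unfolding A_def cis_conv_exp by simp
  have Bc: "B = cis (\<phi> / 2)" unfolding B_def cis_conv_exp by simp
  have ec: "e = cis (\<phi> - 2 * arctan (sin (real h * \<phi>) / (real n + cos (real h * \<phi>))))"
    unfolding e_def cis_conv_exp h_def n_def by simp
  have T1: "S1 = e * S0" and T0: "S0 \<noteq> 0"
    using trig[of h n \<phi>] h4 nh unfolding S0v S1v Ac Bc ec by auto
  define c where "c = S0 / 2 ^ m"
  show ?thesis
  proof (intro exI conjI)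
    show "c \<noteq> 0" unfolding c_def using T0 by simp
    show "code_proj gs hs (rz_transversal m (- \<phi>) (\<lambda>S. \<alpha> * ket0L m S + \<beta> * ket1L m S))
      = (\<lambda>S. c * (\<alpha> * ket0L m S + exp (\<i> * of_real (\<phi> - 2 * arctan (sin (2 ^ (m - 1) * \<phi>) / (real (qrm_n m) + cos (2 ^ (m - 1) * \<phi>))))) * \<beta> * ket1L m S))"
      unfolding e_def[symmetric] rz
    proof (rule ext)
      fix S
      consider (r) "S \<in> R" | (rc) "S \<in> Rc" | (o) "S \<notin> R" "S \<notin> Rc" by blast
      then show "code_proj gs hs (\<lambda>S. D S * \<psi>0 S) S = c * (\<alpha> * ket0L m S + e * \<beta> * ket1L m S)"
      proof cases
        case r
        have "(\<Sum>y\<in>R. D (sd S y) * \<psi>0 (sd S y)) = (\<Sum>y\<in>R. D y * \<psi>0 y)"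
          using sum_shift[of S m "\<lambda>y. D y * \<psi>0 y"] r unfolding R_def by simp
        also have "\<dots> = (\<Sum>y\<in>R. D y * (\<alpha> * K))"
          by (rule sum.cong) (auto simp: \<psi>0_def k0 k1 disj)
        also have "\<dots> = S0 * (\<alpha> * K)" unfolding S0_def by (simp add: sum_distrib_right)
        finally show ?thesis using r Zind[of S] disj[OF r]
          by (simp add: CP k0 k1 c_def)
      next
        case rc
        then obtain z where z: "z \<in> R" "S = sd z U" unfolding Rc_def by blast
        have "(\<Sum>y\<in>R. D (sd S y) * \<psi>0 (sd S y)) = (\<Sum>y\<in>R. D (sd (sd z y) U) * \<psi>0 (sd (sd z y) U))"
          unfolding z(2) sd_def by (rule sum.cong) (auto intro!: arg_cong2[where f="(*)"] arg_cong[where f=D] arg_cong[where f=\<psi>0])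
        also have "\<dots> = (\<Sum>y\<in>R. D (sd y U) * \<psi>0 (sd y U))"
          using sum_shift[of z m "\<lambda>y. D (sd y U) * \<psi>0 (sd y U)"] z unfolding R_def by simp
        also have "\<dots> = (\<Sum>y\<in>R. D (sd y U) * (\<beta> * K))"
        proof (rule sum.cong)
          fix y assume y: "y \<in> R"
          then have "sd y U \<in> Rc" unfolding Rc_def by blast
          moreover then have "sd y U \<notin> R" using disj by blast
          ultimately show "D (sd y U) * \<psi>0 (sd y U) = D (sd y U) * (\<beta> * K)"
            by (simp add: \<psi>0_def k0 k1)
        qed simp
        also have "\<dots> = S1 * (\<beta> * K)" unfolding S1_def by (simp add: sum_distrib_right)
        finally show ?thesis using rc Zind[of S] disj[of S]
          by (auto simp: CP k0 k1 c_def T1)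
      next
        case o
        have "(\<Sum>y\<in>R. D (sd S y) * \<psi>0 (sd S y)) = 0"
        proof (rule sum.neutral, rule ballI)
          fix y assume y: "y \<in> R"
          have "sd S y \<notin> R"
          proof
            assume "sd S y \<in> R"
            then have "sd (sd S y) y \<in> R" using R_sd[of "sd S y" m y] y unfolding R_def by simp
            moreover have "sd (sd S y) y = S" unfolding sd_def by auto
            ultimately show False using o by simp
          qed
          moreover have "sd S y \<notin> Rc"
          proof
            assume "sd S y \<in> Rc"
            then obtain w where w: "w \<in> R" "sd S y = sd w U" unfolding Rc_def by blast
            have "S = sd (sd w y) U" using w(2) unfolding sd_def by blast
            moreover have "sd w y \<in> R" using R_sd[of w m y] w y unfolding R_def by simp
            ultimately show False using o unfolding Rc_def by blast
          qed
          ultimately show "D (sd S y) * \<psi>0 (sd S y) = 0" by (simp add: \<psi>0_def k0 k1)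
        qed
        then show ?thesis using o by (simp add: CP k0 k1)
      qed
    qed
  qed
qed

theorem lemma1:
  fixes m :: nat and \<phi> :: real and b :: "nat \<Rightarrow> bool" and \<alpha> \<beta> :: complex
    and gs hs :: "nat set list"
  assumes "m \<ge> 3"
    and "\<phi> = (\<Sum>k. of_bool (b k) * 2 * pi / 2 ^ (k + 1))"
    and "cmod \<alpha> ^ 2 + cmod \<beta> ^ 2 = 1"
    and "is_X_generators m gs"
    and "is_Z_generators m hs"
  shows "let \<phi>m = 2 ^ (m - 1) * \<phi>;
             \<phi>' = \<phi> - 2 * arctan (sin \<phi>m / (real (qrm_n m) + cos \<phi>m))
         in \<exists>c::complex. c \<noteq> 0 \<and>
              code_proj gs hs (rz_transversal m (- \<phi>) (\<lambda>S. \<alpha> * ket0L m S + \<beta> * ket1L m S))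
              = (\<lambda>S. c * (\<alpha> * ket0L m S + exp (\<i> * of_real \<phi>') * \<beta> * ket1L m S))"
  unfolding Let_def using main[OF assms(1) assms(4) assms(5)] by simp

end
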